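(* Let $n\ge1$ be an integer and $\kappa\ge0$. Suppose each arc travel time function is separable, $t_a=t_a(v_a)$, and is a polynomial of degree $n$ with nonnegative coefficients. Define $$\zeta(\kappa,n)=\begin{cases}(1+\kappa)^{n+1}&\text{if }\kappa\ge(n+1)^{1/n}-1,\\[2pt] \Big(\frac1{1+\kappa}-\frac{n}{(n+1)^{(n+1)/n}}\Big)^{-1}&\text{if }0\le\kappa\le(n+1)^{1/n}-1.\end{cases}$$ Let $\mathbf f^\kappa$ be any $\kappa$-MSatUE, $\mathbf f^0$ a PRUE flow and $\mathbf f^*$ a system optimal flow. Then $$C(\mathbf f^* )\le C(\mathbf f^\kappa)\le\zeta(\kappa,n)\,C(\mathbf f^* )\le\zeta(\kappa,n)\,C(\mathbf f^0).$$ In particular, $\mathsf{PoSat}_\kappa(G,\mathbf Q,\mathbf t)\le\zeta(\kappa,n)$.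
   Context: Let $G=(\mathcal N,\mathcal A)$ be a finite directed graph and $\mathcal W$ a finite set of OD pairs; each $w$ has demand $Q_w>0$ (vector $\mathbf Q$) and a finite set $\mathcal P_w$ of paths from its origin to its destination; $\mathcal P=\bigcup_w\mathcal P_w$; $\delta^p_a=1$ if arc $a$ lies on path $p$, else $0$. Feasible path flows $\mathbf F=\{\mathbf f\ge0:\sum_{p\in\mathcal P_w}f_p=Q_w\ \forall w\}$, with induced arc flows $v_a=\sum_p\delta^p_af_p$. Path travel time $c_p(\mathbf f)=\sum_a\delta^p_at_a(\mathbf v)$; total system travel time $C(\mathbf f)=\sum_{p\in\mathcal P}c_p(\mathbf f)f_p=\sum_a t_a(\mathbf v)v_a$. A system optimal flow $\mathbf f^*$ minimizes $C$ over $\mathbf F$. A flow $\mathbf f$ is a perfectly rational user equilibrium (PRUE) if $f_p>0\implies c_p(\mathbf f)=\min_{p'\in\mathcal P_w}c_{p'}(\mathbf f)$ for all $w$, $p\in\mathcal P_w$; it is a $\kappa$-MSatUE if $f_p>0\implies c_p(\mathbf f)\le(1+\kappa)\min_{p'\in\mathcal P_w}c_{p'}(\mathbf f)$. The price of satisficing is $\mathsf{PoSat}_\kappa(G,\mathbf Q,\mathbf t)=\max_{\mathbf f^\kappa}C(\mathbf f^\kappa)/C(\mathbf f^0)$, the maximum over all $\kappa$-MSatUE flows $\mathbf f^\kappa$, with $\mathbf f^0$ a PRUE flow. *)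

theory Defs
  imports Complex_Main "HOL-Computational_Algebra.Polynomial"
begin

(* Directed graph G = (N, A): arcs of type 'a, each arc a has tail tl_arc a and head hd_arc a.
   A path from o to d is a nonempty simple path, represented by the list of its arcs. *)
definition is_path :: "'n set \<Rightarrow> 'a set \<Rightarrow> ('a \<Rightarrow> 'n) \<Rightarrow> ('a \<Rightarrow> 'n) \<Rightarrow> 'n \<Rightarrow> 'n \<Rightarrow> 'a list \<Rightarrow> bool" where
  "is_path N A tl_arc hd_arc o' d p \<longleftrightarrow>
     p \<noteq> [] \<and> set p \<subseteq> A \<and>
     tl_arc (hd p) = o' \<and> hd_arc (last p) = d \<and>
     (\<forall>i. Suc i < length p \<longrightarrow> hd_arc (p ! i) = tl_arc (p ! Suc i)) \<and>
     distinct (o' # map hd_arc p) \<and> set (o' # map hd_arc p) \<subseteq> N"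

definition all_paths :: "'w set \<Rightarrow> ('w \<Rightarrow> 'a list set) \<Rightarrow> 'a list set" where
  "all_paths W P = (\<Union>w\<in>W. P w)"

definition delta :: "'a list \<Rightarrow> 'a \<Rightarrow> real" where
  "delta p a = (if a \<in> set p then 1 else 0)"

definition feasible :: "'w set \<Rightarrow> ('w \<Rightarrow> 'a list set) \<Rightarrow> ('w \<Rightarrow> real) \<Rightarrow> ('a list \<Rightarrow> real) \<Rightarrow> bool" where
  "feasible W P Q f \<longleftrightarrow> (\<forall>p\<in>all_paths W P. 0 \<le> f p) \<and> (\<forall>w\<in>W. (\<Sum>p\<in>P w. f p) = Q w)"

definition arc_flow :: "'w set \<Rightarrow> ('w \<Rightarrow> 'a list set) \<Rightarrow> ('a list \<Rightarrow> real) \<Rightarrow> 'a \<Rightarrow> real" where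
  "arc_flow W P f a = (\<Sum>p\<in>all_paths W P. delta p a * f p)"

(* separable arc travel time t_a(v_a) = poly (tp a) v_a *)
definition path_cost :: "'a set \<Rightarrow> 'w set \<Rightarrow> ('w \<Rightarrow> 'a list set) \<Rightarrow> ('a \<Rightarrow> real poly) \<Rightarrow> ('a list \<Rightarrow> real) \<Rightarrow> 'a list \<Rightarrow> real" where
  "path_cost A W P tp f p = (\<Sum>a\<in>A. delta p a * poly (tp a) (arc_flow W P f a))"

definition total_cost :: "'a set \<Rightarrow> 'w set \<Rightarrow> ('w \<Rightarrow> 'a list set) \<Rightarrow> ('a \<Rightarrow> real poly) \<Rightarrow> ('a list \<Rightarrow> real) \<Rightarrow> real" where
  "total_cost A W P tp f = (\<Sum>a\<in>A. poly (tp a) (arc_flow W P f a) * arc_flow W P f a)"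

definition system_optimal where
  "system_optimal A W P Q tp f \<longleftrightarrow> feasible W P Q f \<and>
     (\<forall>g. feasible W P Q g \<longrightarrow> total_cost A W P tp f \<le> total_cost A W P tp g)"

definition PRUE where
  "PRUE A W P Q tp f \<longleftrightarrow> feasible W P Q f \<and>
     (\<forall>w\<in>W. \<forall>p\<in>P w. f p > 0 \<longrightarrow>
        path_cost A W P tp f p = Min (path_cost A W P tp f ` P w))"

definition MSatUE where
  "MSatUE \<kappa> A W P Q tp f \<longleftrightarrow> feasible W P Q f \<and>
     (\<forall>w\<in>W. \<forall>p\<in>P w. f p > 0 \<longrightarrow>
        path_cost A W P tp f p \<le> (1 + \<kappa>) * Min (path_cost A W P tp f ` P w))"

(* price of satisficing, relative to a given PRUE flow f0 *)
definition PoSat where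
  "PoSat \<kappa> A W P Q tp f0 =
     (SUP g\<in>{g. MSatUE \<kappa> A W P Q tp g}. total_cost A W P tp g / total_cost A W P tp f0)"

definition zeta :: "real \<Rightarrow> nat \<Rightarrow> real" where
  "zeta \<kappa> n = (if \<kappa> \<ge> (real n + 1) powr (1 / real n) - 1 then (1 + \<kappa>) ^ (n + 1)
               else inverse (1 / (1 + \<kappa>) - real n / (real n + 1) powr ((real n + 1) / real n)))"

end

theory Submission imports Defs begin

lemma young_pow:
  fixes a z :: real assumes a: "a > 0" and z: "z \<ge> 0"
  shows "(real n + 1) * a * z ^ n \<le> real n * z ^ (n+1) + a ^ (n+1)"
proof (cases "z = 0")
  case True thus ?thesis using a by (cases n) auto
next
  case False
  hence zp: "z > 0" using z by simp
  have "1 + real (n+1) * (a/z - 1) \<le> (1 + (a/z - 1)) ^ (n+1)"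
    by (rule Bernoulli_inequality) (use a zp in simp)
  hence "1 + real (n+1) * (a/z - 1) \<le> (a/z) ^ (n+1)" by simp
  hence "z^(n+1) * (1 + real (n+1) * (a/z - 1)) \<le> z^(n+1) * (a/z) ^ (n+1)"
    using zp by (intro mult_left_mono) auto
  also have "z^(n+1) * (a/z) ^ (n+1) = a^(n+1)" using zp by (simp add: power_divide)
  also have "z^(n+1) * (1 + real (n+1) * (a/z - 1)) = (real n + 1) * a * z ^ n - real n * z^(n+1)"
    using zp by (simp add: field_simps)
  finally show ?thesis by simp
qed

lemma mono_ineq:
  fixes z kappa lam M :: real
  assumes z: "z \<ge> 0" and k: "k \<le> n" and kap: "kappa \<ge> 0" and lam: "lam \<ge> 0"
    and M: "M \<ge> 1 + kappa" and top: "(1+kappa) * z^n - lam * z^(n+1) \<le> M"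
  shows "(1+kappa) * z^k - lam * z^(k+1) \<le> M"
proof -
  have eq: "\<And>j. (1+kappa) * z^j - lam * z^(j+1) = z^j * (1 + kappa - lam * z)"
    by (simp add: algebra_simps)
  consider "1 + kappa - lam * z \<le> 0" | "z \<le> 1" "1 + kappa - lam * z > 0" | "z > 1" "1 + kappa - lam * z > 0" by linarith
  thus ?thesis
  proof cases
    case 1
    have "z^k * (1 + kappa - lam * z) \<le> 0" using 1 z by (simp add: mult_nonneg_nonpos)
    thus ?thesis using eq[of k] M kap by linarith
  next
    case 2
    have "z^k \<le> 1" using 2 z by (simp add: power_le_one)
    have "z^k * (1 + kappa - lam * z) \<le> 1 * (1 + kappa)"
      using 2 z lam \<open>z^k \<le> 1\<close> by (intro mult_mono) (auto simp: mult_nonneg_nonneg)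
    thus ?thesis using eq M by simp
  next
    case 3
    have "z^k \<le> z^n" using 3 k by (simp add: power_increasing)
    hence "z^k * (1 + kappa - lam * z) \<le> z^n * (1 + kappa - lam * z)"
      using 3 by (intro mult_right_mono) auto
    thus ?thesis using eq[of k] eq[of n] top by linarith
  qed
qed

lemma hom_ineq:
  fixes x y kappa lam M :: real
  assumes x: "x \<ge> 0" and y: "y \<ge> 0" and lam: "lam \<ge> 0"
    and H: "\<And>z. z \<ge> 0 \<Longrightarrow> (1+kappa) * z^k - lam * z^(k+1) \<le> M" and M: "M \<ge> 0"
  shows "(1+kappa) * x^k * y \<le> lam * x^(k+1) + M * y^(k+1)"
proof (cases "y = 0")
  case True thus ?thesis using x lam by simp
next
  case False
  hence yp: "y > 0" using y by simp
  have "(1+kappa) * (x/y)^k - lam * (x/y)^(k+1) \<le> M" using H[of "x/y"] x yp by simp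
  hence "y^(k+1) * ((1+kappa) * (x/y)^k - lam * (x/y)^(k+1)) \<le> y^(k+1) * M"
    using yp by (intro mult_left_mono) auto
  also have "y^(k+1) * ((1+kappa) * (x/y)^k - lam * (x/y)^(k+1)) = (1+kappa) * x^k * y - lam * x^(k+1)"
    using yp by (simp add: field_simps power_divide)
  finally show ?thesis by (simp add: algebra_simps)
qed

lemma poly_nonneg:
  fixes p :: "real poly" assumes "\<forall>i. coeff p i \<ge> 0" "x \<ge> 0"
  shows "poly p x \<ge> 0"
  unfolding poly_altdef using assms by (intro sum_nonneg) auto

lemma poly_ineq:
  fixes p :: "real poly" and x y kappa lam M :: real
  assumes c: "\<forall>i. coeff p i \<ge> 0" and d: "degree p = n"
    and x: "x \<ge> 0" and y: "y \<ge> 0" and lam: "lam \<ge> 0" and kap: "kappa \<ge> 0"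
    and M: "M \<ge> 1 + kappa" and top: "\<And>z. z \<ge> 0 \<Longrightarrow> (1+kappa) * z^n - lam * z^(n+1) \<le> M"
  shows "(1+kappa) * poly p x * y \<le> lam * (poly p x * x) + M * (poly p y * y)"
proof -
  have "(1+kappa) * poly p x * y = (\<Sum>i\<le>n. coeff p i * ((1+kappa) * x^i * y))"
    unfolding poly_altdef d by (simp add: sum_distrib_left sum_distrib_right algebra_simps)
  also have "\<dots> \<le> (\<Sum>i\<le>n. coeff p i * (lam * x^(i+1) + M * y^(i+1)))"
  proof (intro sum_mono mult_left_mono)
    fix i assume "i \<in> {..n}"
    show "(1+kappa) * x^i * y \<le> lam * x^(i+1) + M * y^(i+1)"
      by (rule hom_ineq[OF x y lam]) (use mono_ineq[OF _ _ kap lam M top] \<open>i \<in> {..n}\<close> kap M in auto)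
  qed (use c in auto)
  also have "\<dots> = lam * (poly p x * x) + M * (poly p y * y)"
    unfolding poly_altdef d by (simp add: sum_distrib_left sum_distrib_right algebra_simps sum.distrib)
  finally show ?thesis .
qed

lemma cost_identity:
  assumes "finite A" "finite (all_paths W P)"
  shows "(\<Sum>a\<in>A. poly (tp a) (arc_flow W P f a) * arc_flow W P h a)
       = (\<Sum>p\<in>all_paths W P. h p * path_cost A W P tp f p)"
  unfolding arc_flow_def[of W P h] path_cost_def
  by (simp add: sum_distrib_left sum_distrib_right algebra_simps sum.swap[of _ A])

lemma arc_flow_nonneg:
  assumes "feasible W P Q f" shows "arc_flow W P f a \<ge> 0"
  using assms unfolding arc_flow_def feasible_def delta_def by (intro sum_nonneg) auto

lemma path_cost_nonneg:
  assumes "feasible W P Q f" "\<forall>a\<in>A. \<forall>i. coeff (tp a) i \<ge> 0"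
  shows "path_cost A W P tp f p \<ge> 0"
  unfolding path_cost_def delta_def
  using assms poly_nonneg[of "tp _" "arc_flow W P f _"] arc_flow_nonneg[OF assms(1)] by (intro sum_nonneg) auto

lemma total_cost_nonneg:
  assumes "feasible W P Q f" "\<forall>a\<in>A. \<forall>i. coeff (tp a) i \<ge> 0"
  shows "total_cost A W P tp f \<ge> 0"
  unfolding total_cost_def
  using assms poly_nonneg[of "tp _" "arc_flow W P f _"] arc_flow_nonneg[OF assms(1)] by (intro sum_nonneg mult_nonneg_nonneg) auto

lemma main_bound:
  assumes fA: "finite A" and fW: "finite W" and fP: "\<forall>w\<in>W. finite (P w)"
    and disj: "\<forall>w\<in>W. \<forall>w'\<in>W. w \<noteq> w' \<longrightarrow> P w \<inter> P w' = {}"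
    and Qp: "\<forall>w\<in>W. Q w > 0"
    and cf: "\<forall>a\<in>A. degree (tp a) = n \<and> (\<forall>i. coeff (tp a) i \<ge> 0)"
    and kap: "kappa \<ge> 0" and g: "MSatUE kappa A W P Q tp g" and fs: "feasible W P Q fs"
    and lam: "lam \<ge> 0" and M: "M \<ge> 1 + kappa"
    and top: "\<And>z. z \<ge> 0 \<Longrightarrow> (1+kappa) * z^n - lam * z^(n+1) \<le> M"
  shows "total_cost A W P tp g \<le> lam * total_cost A W P tp g + M * total_cost A W P tp fs"
proof -
  have fg: "feasible W P Q g" using g unfolding MSatUE_def by simp
  have fAP: "finite (all_paths W P)" unfolding all_paths_def using fW fP by auto
  have cn: "\<forall>a\<in>A. \<forall>i. coeff (tp a) i \<ge> 0" using cf by auto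
  let ?c = "path_cost A W P tp g"
  have C1: "total_cost A W P tp g = (\<Sum>p\<in>all_paths W P. g p * ?c p)"
    unfolding total_cost_def by (rule cost_identity[OF fA fAP])
  have C2: "(\<Sum>a\<in>A. poly (tp a) (arc_flow W P g a) * arc_flow W P fs a) = (\<Sum>p\<in>all_paths W P. fs p * ?c p)"
    by (rule cost_identity[OF fA fAP])
  have split: "\<And>h. (\<Sum>p\<in>all_paths W P. h p) = (\<Sum>w\<in>W. \<Sum>p\<in>P w. h p)"
    unfolding all_paths_def by (rule sum.UNION_disjoint[OF fW fP disj])
  have perw: "(\<Sum>p\<in>P w. g p * ?c p) \<le> (1+kappa) * (\<Sum>p\<in>P w. fs p * ?c p)" if w: "w \<in> W" for w
  proof -
    let ?m = "Min (?c ` P w)"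
    have ne: "P w \<noteq> {}" using fg Qp w unfolding feasible_def by fastforce
    have fin: "finite (P w)" using fP w by auto
    have sub: "P w \<subseteq> all_paths W P" using w unfolding all_paths_def by auto
    have m0: "?m \<ge> 0" using ne fin path_cost_nonneg[OF fg cn] by (subst Min_ge_iff) auto
    have "(\<Sum>p\<in>P w. g p * ?c p) \<le> (\<Sum>p\<in>P w. g p * ((1+kappa) * ?m))"
    proof (intro sum_mono)
      fix p assume p: "p \<in> P w"
      have gp: "g p \<ge> 0" using fg p sub unfolding feasible_def by auto
      show "g p * ?c p \<le> g p * ((1+kappa) * ?m)"
      proof (cases "g p > 0")
        case True
        hence "?c p \<le> (1+kappa) * ?m" using g w p unfolding MSatUE_def by auto
        thus ?thesis using gp by (intro mult_left_mono) auto
      next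
        case False thus ?thesis using gp by simp
      qed
    qed
    also have "\<dots> = (\<Sum>p\<in>P w. g p) * ((1+kappa) * ?m)"
      by (simp add: sum_distrib_right)
    also have "\<dots> = (\<Sum>p\<in>P w. fs p) * ((1+kappa) * ?m)"
      using fg fs w unfolding feasible_def by simp
    also have "\<dots> = (1+kappa) * (\<Sum>p\<in>P w. fs p * ?m)"
      by (simp add: sum_distrib_right sum_distrib_left algebra_simps sum.distrib)
    also have "\<dots> \<le> (1+kappa) * (\<Sum>p\<in>P w. fs p * ?c p)"
    proof (rule mult_left_mono[OF sum_mono])
      fix p assume p: "p \<in> P w"
      have "fs p \<ge> 0" using fs p sub unfolding feasible_def by auto
      moreover have "?m \<le> ?c p" using fin p by auto
      ultimately show "fs p * ?m \<le> fs p * ?c p" by (intro mult_left_mono)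
    qed (use kap in auto)
    finally show ?thesis .
  qed
  have "total_cost A W P tp g \<le> (1+kappa) * (\<Sum>a\<in>A. poly (tp a) (arc_flow W P g a) * arc_flow W P fs a)"
  proof -
    have "(\<Sum>w\<in>W. \<Sum>p\<in>P w. g p * ?c p) \<le> (\<Sum>w\<in>W. (1+kappa) * (\<Sum>p\<in>P w. fs p * ?c p))"
      using perw by (rule sum_mono)
    thus ?thesis unfolding C1 C2 split sum_distrib_left .
  qed
  also have "\<dots> = (\<Sum>a\<in>A. (1+kappa) * poly (tp a) (arc_flow W P g a) * arc_flow W P fs a)"
    by (simp add: sum_distrib_left algebra_simps)
  also have "\<dots> \<le> (\<Sum>a\<in>A. lam * (poly (tp a) (arc_flow W P g a) * arc_flow W P g a)
                    + M * (poly (tp a) (arc_flow W P fs a) * arc_flow W P fs a))"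
    using cf arc_flow_nonneg[OF fg] arc_flow_nonneg[OF fs]
    by (intro sum_mono poly_ineq[OF _ _ _ _ lam kap M top]) auto
  also have "\<dots> = lam * total_cost A W P tp g + M * total_cost A W P tp fs"
    unfolding total_cost_def by (simp add: sum.distrib sum_distrib_left)
  finally show ?thesis .
qed

lemma zeta_bound:
  fixes C D kappa :: real
  assumes n: "n \<ge> 1" and kap: "kappa \<ge> 0"
    and H: "\<And>lam M. lam \<ge> 0 \<Longrightarrow> M \<ge> 1 + kappa
              \<Longrightarrow> (\<And>z. z \<ge> 0 \<Longrightarrow> (1+kappa) * z^n - lam * z^(n+1) \<le> M) \<Longrightarrow> C \<le> lam * C + M * D"
  shows "C \<le> zeta kappa n * D"
proof -
  define r where "r = (real n + 1) powr (1 / real n)"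
  have rp: "r > 0" unfolding r_def by simp
  have rn: "r ^ n = real n + 1"
  proof -
    have "r ^ n = r powr real n" using rp by (simp add: powr_realpow)
    also have "\<dots> = (real n + 1) powr (1 / real n * real n)" unfolding r_def by (simp add: powr_powr)
    also have "\<dots> = real n + 1" using n by simp
    finally show ?thesis .
  qed
  have rr: "(real n + 1) powr ((real n + 1) / real n) = (real n + 1) * r"
  proof -
    have "(real n + 1) / real n = 1 + 1 / real n" using n by (simp add: field_simps)
    thus ?thesis unfolding r_def by (simp add: powr_add)
  qed
  have fin: "C \<le> M / (1 - lam) * D" if "lam \<ge> 0" "lam < 1" "M \<ge> 1 + kappa"
      "\<And>z. z \<ge> 0 \<Longrightarrow> (1+kappa) * z^n - lam * z^(n+1) \<le> M" for lam M
  proof -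
    have "C \<le> lam * C + M * D" using H that by blast
    hence "(1 - lam) * C \<le> M * D" by (simp add: algebra_simps)
    thus ?thesis using that(2) by (simp add: field_simps)
  qed
  show ?thesis
  proof (cases "kappa \<ge> r - 1")
    case True
    have z: "zeta kappa n = (1+kappa)^(n+1)" unfolding zeta_def r_def[symmetric] using True by simp
    have "r ^ n \<le> (1+kappa)^n" using True rp by (intro power_mono) auto
    hence pn: "(1+kappa)^n \<ge> real n + 1" using rn by simp
    let ?lam = "real n / (real n + 1)" and ?M = "(1+kappa)^(n+1) / (real n + 1)"
    have "C \<le> ?M / (1 - ?lam) * D"
    proof (rule fin)
      show "?lam \<ge> 0" by simp
      show "?lam < 1" by simp
      have "(1+kappa) * (real n + 1) \<le> (1+kappa) * (1+kappa)^n" using pn kap by (intro mult_left_mono) auto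
      thus "?M \<ge> 1 + kappa" by (simp add: field_simps)
      fix z :: real assume "z \<ge> 0"
      from young_pow[OF _ this, of "1+kappa" n] kap
      have "(real n + 1) * (1+kappa) * z ^ n \<le> real n * z ^ (n+1) + (1+kappa) ^ (n+1)" by simp
      hence "((real n + 1) * (1+kappa) * z ^ n - real n * z ^ (n+1)) / (real n + 1) \<le> (1+kappa) ^ (n+1) / (real n + 1)"
        by (intro divide_right_mono) auto
      moreover have "((real n + 1) * (1+kappa) * z ^ n - real n * z ^ (n+1)) / (real n + 1) = (1+kappa) * z^n - ?lam * z^(n+1)"
        by (simp add: field_simps)
      ultimately show "(1+kappa) * z^n - ?lam * z^(n+1) \<le> ?M" by simp
    qed
    also have "?M / (1 - ?lam) = (1+kappa)^(n+1)" by (simp add: field_simps)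
    finally show ?thesis using z by simp
  next
    case False
    let ?lam = "(1+kappa) * real n / ((real n + 1) * r)" and ?M = "1 + kappa"
    have z: "zeta kappa n = ?M / (1 - ?lam)"
      unfolding zeta_def r_def[symmetric] rr using False rp kap by (simp add: field_simps)
    have "C \<le> ?M / (1 - ?lam) * D"
    proof (rule fin)
      show "?lam \<ge> 0" using kap rp by simp
      have "(1+kappa) * real n \<le> r * real n" using False by (intro mult_right_mono) auto
      also have "\<dots> < (real n + 1) * r" using rp by simp
      finally show "?lam < 1" using rp by simp
      show "?M \<ge> 1 + kappa" by simp
      fix z :: real assume "z \<ge> 0"
      from young_pow[OF rp this, of n]
      have "(real n + 1) * r * z ^ n \<le> real n * z ^ (n+1) + (real n + 1) * r" using rn by (simp add: mult.commute)
      hence "(1+kappa) * ((real n + 1) * r * z ^ n) \<le> (1+kappa) * (real n * z ^ (n+1) + (real n + 1) * r)"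
        using kap by (intro mult_left_mono) auto
      hence "(1+kappa) * ((real n + 1) * r * z ^ n) / ((real n + 1) * r) \<le> (1+kappa) * (real n * z ^ (n+1) + (real n + 1) * r) / ((real n + 1) * r)"
        using rp by (intro divide_right_mono) auto
      moreover have "(1+kappa) * ((real n + 1) * r * z ^ n) / ((real n + 1) * r) = (1+kappa) * z^n"
        using rp by simp
      moreover have "(1+kappa) * (real n * z ^ (n+1) + (real n + 1) * r) / ((real n + 1) * r) = ?lam * z^(n+1) + ?M"
      proof -
        have "r + r * real n \<noteq> 0" using rp by (metis add_pos_nonneg less_irrefl mult_nonneg_nonneg of_nat_0_le_iff less_imp_le)
        thus ?thesis by (simp add: field_simps)
      qed
      ultimately show "(1+kappa) * z^n - ?lam * z^(n+1) \<le> ?M" by simp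
    qed
    thus ?thesis using z by simp
  qed
qed

theorem lemma5:
  fixes N :: "'n set" and A :: "'a set" and tl_arc hd_arc :: "'a \<Rightarrow> 'n"
    and W :: "('n \<times> 'n) set" and Q :: "'n \<times> 'n \<Rightarrow> real" and P :: "'n \<times> 'n \<Rightarrow> 'a list set"
    and tp :: "'a \<Rightarrow> real poly" and n :: nat and \<kappa> :: real
    and fk f0 fs :: "'a list \<Rightarrow> real"
  assumes "finite N" and "finite A"
    and "\<forall>a\<in>A. tl_arc a \<in> N \<and> hd_arc a \<in> N"
    and "finite W" and "W \<subseteq> N \<times> N" and "\<forall>w\<in>W. fst w \<noteq> snd w"
    and "\<forall>w\<in>W. Q w > 0"
    and "\<forall>w\<in>W. finite (P w) \<and> (\<forall>p\<in>P w. is_path N A tl_arc hd_arc (fst w) (snd w) p)"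
    and "n \<ge> 1" and "\<kappa> \<ge> 0"
    and "\<forall>a\<in>A. degree (tp a) = n \<and> (\<forall>i. coeff (tp a) i \<ge> 0)"
    and "MSatUE \<kappa> A W P Q tp fk"
    and "PRUE A W P Q tp f0"
    and "system_optimal A W P Q tp fs"
  shows "total_cost A W P tp fs \<le> total_cost A W P tp fk
       \<and> total_cost A W P tp fk \<le> zeta \<kappa> n * total_cost A W P tp fs
       \<and> zeta \<kappa> n * total_cost A W P tp fs \<le> zeta \<kappa> n * total_cost A W P tp f0
       \<and> PoSat \<kappa> A W P Q tp f0 \<le> zeta \<kappa> n"
proof -
  note a = assms
  have cf: "\<forall>a\<in>A. \<forall>i. coeff (tp a) i \<ge> 0" using a(11) by auto
  have fP: "\<forall>w\<in>W. finite (P w)" using a(8) by auto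
  have disj: "\<forall>w\<in>W. \<forall>w'\<in>W. w \<noteq> w' \<longrightarrow> P w \<inter> P w' = {}"
  proof (intro ballI impI)
    fix w w' assume w: "w \<in> W" and w': "w' \<in> W" and ne: "w \<noteq> w'"
    show "P w \<inter> P w' = {}"
    proof (rule ccontr)
      assume "P w \<inter> P w' \<noteq> {}"
      then obtain p where p: "p \<in> P w" "p \<in> P w'" by blast
      have "is_path N A tl_arc hd_arc (fst w) (snd w) p" "is_path N A tl_arc hd_arc (fst w') (snd w') p"
        using a(8) w w' p by auto
      hence "fst w = fst w'" "snd w = snd w'" unfolding is_path_def by auto
      thus False using ne by (simp add: prod_eq_iff)
    qed
  qed
  have fs: "feasible W P Q fs" using a(14) unfolding system_optimal_def by simp
  have f0: "feasible W P Q f0" using a(13) unfolding PRUE_def by simp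
  have bound: "total_cost A W P tp g \<le> zeta \<kappa> n * total_cost A W P tp fs"
    if g: "MSatUE \<kappa> A W P Q tp g" for g
    by (rule zeta_bound[OF a(9) a(10)], rule main_bound[OF a(2) a(4) fP disj a(7) a(11) a(10) g fs]) auto
  have zpos: "zeta \<kappa> n \<ge> 0"
  proof -
    have "(1::real) \<le> zeta \<kappa> n * 1"
      by (rule zeta_bound[OF a(9) a(10)]) (use a(10) in auto)
    thus ?thesis by simp
  qed
  have fk: "feasible W P Q fk" using a(12) unfolding MSatUE_def by simp
  have i: "total_cost A W P tp fs \<le> total_cost A W P tp fk" using a(14) fk unfolding system_optimal_def by blast
  have so0: "total_cost A W P tp fs \<le> total_cost A W P tp f0" using a(14) f0 unfolding system_optimal_def by blast
  have iii: "zeta \<kappa> n * total_cost A W P tp fs \<le> zeta \<kappa> n * total_cost A W P tp f0"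
    using so0 zpos by (rule mult_left_mono)
  have iv: "PoSat \<kappa> A W P Q tp f0 \<le> zeta \<kappa> n"
    unfolding PoSat_def
  proof (rule cSUP_least)
    show "{g. MSatUE \<kappa> A W P Q tp g} \<noteq> {}" using a(12) by blast
    fix g assume "g \<in> {g. MSatUE \<kappa> A W P Q tp g}"
    hence "total_cost A W P tp g \<le> zeta \<kappa> n * total_cost A W P tp f0"
      using bound iii by fastforce
    moreover have "total_cost A W P tp f0 \<ge> 0" by (rule total_cost_nonneg[OF f0 cf])
    ultimately show "total_cost A W P tp g / total_cost A W P tp f0 \<le> zeta \<kappa> n"
      using zpos by (cases "total_cost A W P tp f0 = 0") (auto simp: divide_le_eq)
  qed
  show ?thesis using i bound[OF a(12)] iii iv by blast
qed

end
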